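(* Let $n\ge3$, $1<\alpha\le\sqrt2$, $\overline\alpha=\sqrt{2-\alpha^2}$. Then the center density of $D_n^\alpha$ is $$\delta(D_n^\alpha)=\frac{1}{2^{n/2}\alpha^{n-3}(\alpha^3+\overline\alpha^3)}.$$
   Context: Let $\mathbf{e}_1,\dots,\mathbf{e}_n$ be the standard basis of $\mathbb{R}^n$. For $n\ge3$, $1\le\alpha\le\sqrt2$ and $\overline\alpha:=\sqrt{2-\alpha^2}$, $D_n^\alpha$ is the lattice with basis $\mathbf{b}_1=\alpha\mathbf{e}_1+\overline\alpha\mathbf{e}_2$, $\mathbf{b}_2=\alpha\mathbf{e}_2+\overline\alpha\mathbf{e}_3$, $\mathbf{b}_3=\overline\alpha\mathbf{e}_1+\alpha\mathbf{e}_3$, $\mathbf{b}_4=\overline\alpha\mathbf{e}_3-\alpha\mathbf{e}_4$, and $\mathbf{b}_k=\overline\alpha\mathbf{e}_{k-1}-\alpha\mathbf{e}_k$ for $5\le k\le n$. Center density: $\delta(\Lambda)=\lambda_1(\Lambda)^n/(2^n\operatorname{vol}(\Lambda))$. *)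

theory Defs
  imports Complex_Main "Jordan_Normal_Form.Determinant"
begin

text \<open>Vectors of R^n are represented as functions nat => real, with components
  indexed by 1..n (components outside 1..n are irrelevant / zero).\<close>

definition std_e :: "nat \<Rightarrow> nat \<Rightarrow> real" where
  "std_e k = (\<lambda>i. if i = k then 1 else 0)"

definition alpha_bar :: "real \<Rightarrow> real" where
  "alpha_bar a = sqrt (2 - a\<^sup>2)"

definition Dbasis :: "real \<Rightarrow> nat \<Rightarrow> nat \<Rightarrow> real" where
  "Dbasis a k = (let ab = alpha_bar a in
     if k = 1 then (\<lambda>i. a * std_e 1 i + ab * std_e 2 i)
     else if k = 2 then (\<lambda>i. a * std_e 2 i + ab * std_e 3 i)
     else if k = 3 then (\<lambda>i. ab * std_e 1 i + a * std_e 3 i)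
     else if k = 4 then (\<lambda>i. ab * std_e 3 i - a * std_e 4 i)
     else (\<lambda>i. ab * std_e (k - 1) i - a * std_e k i))"

definition Dlattice :: "real \<Rightarrow> nat \<Rightarrow> (nat \<Rightarrow> real) set" where
  "Dlattice a n = {v. \<exists>c :: nat \<Rightarrow> int.
      v = (\<lambda>i. \<Sum>k = 1..n. of_int (c k) * Dbasis a k i)}"

definition vnorm :: "nat \<Rightarrow> (nat \<Rightarrow> real) \<Rightarrow> real" where
  "vnorm n v = sqrt (\<Sum>i = 1..n. (v i)\<^sup>2)"

definition lambda1 :: "nat \<Rightarrow> (nat \<Rightarrow> real) set \<Rightarrow> real" where
  "lambda1 n L = Inf {vnorm n v | v. v \<in> L \<and> v \<noteq> (\<lambda>i. 0)}"

text \<open>Volume (covolume) of D_n^alpha: |det| of the basis matrix (column j = b_(j+1)).\<close>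
definition Dvol :: "real \<Rightarrow> nat \<Rightarrow> real" where
  "Dvol a n = \<bar>det (mat n n (\<lambda>(i, j). Dbasis a (j + 1) (i + 1)))\<bar>"

definition Dcenter_density :: "real \<Rightarrow> nat \<Rightarrow> real" where
  "Dcenter_density a n = lambda1 n (Dlattice a n) ^ n / (2 ^ n * Dvol a n)"

end

theory Submission
  imports Defs
begin


lemma det2: assumes "(A :: real mat) \<in> carrier_mat 2 2"
  shows "det A = A$$(0,0)*A$$(1,1) - A$$(0,1)*A$$(1,0)"
proof -
  have "det A = (\<Sum>j<2. A $$ (0,j) * cofactor A 0 j)" by (rule laplace_expansion_row[OF assms]) auto
  also have "\<dots> = A$$(0,0)*A$$(1,1) - A$$(0,1)*A$$(1,0)"
    using assms by (simp add: numeral_2_eq_2 cofactor_def det_single mat_delete_def)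
  finally show ?thesis .
qed

lemma det2m: "det (mat 2 2 f) = f (0,0) * f (1,1) - f (0,1) * (f (1,0) :: real)"
  by (subst det2) auto

lemmas det2m' = det2m[unfolded numeral_2_eq_2]

lemma det3: assumes "(A :: real mat) \<in> carrier_mat 3 3"
  shows "det A = A$$(0,0)*(A$$(1,1)*A$$(2,2) - A$$(1,2)*A$$(2,1))
     - A$$(0,1)*(A$$(1,0)*A$$(2,2) - A$$(1,2)*A$$(2,0))
     + A$$(0,2)*(A$$(1,0)*A$$(2,1) - A$$(1,1)*A$$(2,0))"
proof -
  have "det A = (\<Sum>j<3. A $$ (0,j) * cofactor A 0 j)" by (rule laplace_expansion_row[OF assms]) auto
  also have "\<dots> = A$$(0,0)*(A$$(1,1)*A$$(2,2) - A$$(1,2)*A$$(2,1))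
     - A$$(0,1)*(A$$(1,0)*A$$(2,2) - A$$(1,2)*A$$(2,0))
     + A$$(0,2)*(A$$(1,0)*A$$(2,1) - A$$(1,1)*A$$(2,0))"
    using assms by (simp add: numeral_3_eq_3 cofactor_def det2m' mat_delete_carrier mat_delete_def numeral_2_eq_2 algebra_simps)
  finally show ?thesis .
qed

definition MM :: "real \<Rightarrow> nat \<Rightarrow> real mat" where
  "MM a n = mat n n (\<lambda>(i, j). Dbasis a (j + 1) (i + 1))"

lemma det_MM3: "det (MM a 3) = a^3 + alpha_bar a ^ 3"
  by (subst det3) (auto simp: MM_def Dbasis_def std_e_def Let_def power3_eq_cube algebra_simps)

lemma det_MM_Suc: assumes "n \<ge> 3" shows "det (MM a (Suc n)) = - a * det (MM a n)"
proof -
  have C: "MM a (Suc n) \<in> carrier_mat (Suc n) (Suc n)" by (simp add: MM_def)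
  have "det (MM a (Suc n)) = (\<Sum>j<Suc n. MM a (Suc n) $$ (n,j) * cofactor (MM a (Suc n)) n j)"
    by (rule laplace_expansion_row[OF C]) auto
  also have "\<dots> = MM a (Suc n) $$ (n,n) * cofactor (MM a (Suc n)) n n"
  proof -
    have "MM a (Suc n) $$ (n,j) = 0" if "j < n" for j
      using assms that by (auto simp: MM_def Dbasis_def std_e_def Let_def)
    thus ?thesis by simp
  qed
  also have "mat_delete (MM a (Suc n)) n n = MM a n"
    by (rule eq_matI) (auto simp: MM_def mat_delete_def)
  hence "cofactor (MM a (Suc n)) n n = det (MM a n)"
    by (simp add: cofactor_def)
  also have "MM a (Suc n) $$ (n,n) = - a" using assms by (simp add: MM_def Dbasis_def std_e_def Let_def)
  finally show ?thesis by simp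
qed

lemma det_MM: assumes "n \<ge> 3" shows "det (MM a n) = (-a)^(n-3) * (a^3 + alpha_bar a ^ 3)"
  using assms
proof (induction n rule: dec_induct)
  case base thus ?case by (simp add: det_MM3)
next
  case (step m)
  then obtain k where "m = k + 3" by (metis le_add_diff_inverse2)
  have "det (MM a (Suc m)) = - a * det (MM a m)" using step by (intro det_MM_Suc) auto
  also have "\<dots> = (-a)^(Suc m - 3) * (a^3 + alpha_bar a ^ 3)" using step \<open>m = k+3\<close> by simp
  finally show ?case .
qed



definition xv :: "(nat \<Rightarrow> int) \<Rightarrow> nat \<Rightarrow> int" where
  "xv c i = (if i \<le> 3 then c i else - c i)"
definition yv :: "(nat \<Rightarrow> int) \<Rightarrow> nat \<Rightarrow> int" where
  "yv c i = (if i = 1 then c 3 else if i = 2 then c 1 else if i = 3 then c 2 + c 4 else c (i+1))"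

lemma F_id: assumes "n \<ge> 3"
  shows "2 * (\<Sum>i=1..n. xv c i * (xv c i + yv c i)) =
    (c 1 + c 2 + c 3)^2 + (c 1)^2 + (c 2)^2 + (c 3 + c 4)^2 + (\<Sum>k=4..n. (c k - c (k+1))^2) - (c (n+1))^2"
  using assms
proof (induction n rule: dec_induct)
  case base
  show ?case proof -
    have "{1..3::nat} = {1,2,3}" by auto
    thus ?thesis by (simp add: xv_def yv_def power2_eq_square algebra_simps)
  qed
next
  case (step m)
  have "m \<ge> 3" by fact
  hence e: "Suc m \<ge> 4" by simp
  have "2 * (\<Sum>i=1..Suc m. xv c i * (xv c i + yv c i)) = 2 * (\<Sum>i=1..m. xv c i * (xv c i + yv c i))
     + 2 * (xv c (Suc m) * (xv c (Suc m) + yv c (Suc m)))" by (simp add: algebra_simps)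
  also have "xv c (Suc m) * (xv c (Suc m) + yv c (Suc m)) = c (Suc m)^2 - c (Suc m) * c (m+2)"
    using e by (simp add: xv_def yv_def power2_eq_square algebra_simps)
  finally show ?case using step e by (simp add: power2_eq_square algebra_simps)
qed

lemma G_id: assumes "n \<ge> 3"
  shows "(\<Sum>i=1..n. xv c i + yv c i) = 2 * (c 1 + c 2 + c 3) + c (n+1)"
  using assms
proof (induction n rule: dec_induct)
  case base
  show ?case proof -
    have "{1..3::nat} = {1,2,3}" by auto
    thus ?thesis by (simp add: xv_def yv_def algebra_simps)
  qed
next
  case (step m)
  thus ?case by (simp add: xv_def yv_def algebra_simps)
qed

lemma chain_zero:
  assumes "\<forall>j\<in>{4..n}. c j = c (Suc j)" "c (Suc n) = (0::int)" "4 \<le> k" "k \<le> Suc n"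
  shows "c k = 0"
  using assms(4)
proof (induction k rule: inc_induct)
  case base thus ?case using assms(2) by simp
next
  case (step m)
  hence "m \<in> {4..n}" using assms(3) by auto
  thus ?case using assms(1) step by simp
qed

definition tau :: "nat \<Rightarrow> nat" where
  "tau i = (if i = 1 then 3 else if i = 2 then 1 else if i = 3 then 2 else i + 1)"

lemma Dcoef: assumes "1 \<le> k" "1 \<le> i"
  shows "of_int (c k) * Dbasis a k i =
    (if k = i then a * (if i \<le> 3 then 1 else -1) * of_int (c i) else 0)
  + (if k = tau i then alpha_bar a * of_int (c (tau i)) else 0)
  + (if k = 4 then (if i = 3 then alpha_bar a * of_int (c 4) else 0) else 0)"
  using assms by (auto simp: Dbasis_def std_e_def Let_def tau_def)

lemma coord: assumes "n \<ge> 3" "\<forall>k. k < 1 \<or> k > n \<longrightarrow> c k = 0" "1 \<le> i" "i \<le> n"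
  shows "(\<Sum>k=1..n. of_int (c k) * Dbasis a k i) = a * of_int (xv c i) + alpha_bar a * of_int (yv c i)"
proof -
  have "(\<Sum>k=1..n. of_int (c k) * Dbasis a k i) = (\<Sum>k=1..n.
    (if k = i then a * (if i \<le> 3 then 1 else -1) * of_int (c i) else 0)
  + (if k = tau i then alpha_bar a * of_int (c (tau i)) else 0)
  + (if k = 4 then (if i = 3 then alpha_bar a * of_int (c 4) else 0) else 0))"
    using assms(3) by (intro sum.cong refl Dcoef) auto
  also have "\<dots> = a * (if i \<le> 3 then 1 else -1) * of_int (c i)
     + (if tau i \<in> {1..n} then alpha_bar a * of_int (c (tau i)) else 0)
     + (if 4 \<in> {1..n} then (if i = 3 then alpha_bar a * of_int (c 4) else 0) else 0)"
    using assms(3,4) by (simp add: sum.distrib)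
  also have "\<dots> = a * of_int (xv c i) + alpha_bar a * of_int (yv c i)"
    using assms by (auto simp: xv_def yv_def tau_def algebra_simps)
  finally show ?thesis .
qed

lemma F_pos: assumes "n \<ge> 3" "\<forall>k. k < 1 \<or> k > n \<longrightarrow> c k = 0" "k0 \<in> {1..n}" "c k0 \<noteq> 0"
  shows "(\<Sum>i=1..n. xv c i * (xv c i + yv c i)) \<ge> 1"
proof (rule ccontr)
  assume "\<not> ?thesis"
  hence "2 * (\<Sum>i=1..n. xv c i * (xv c i + yv c i)) \<le> 0" by simp
  hence le: "(c 1 + c 2 + c 3)^2 + (c 1)^2 + (c 2)^2 + (c 3 + c 4)^2 + (\<Sum>k=4..n. (c k - c (k+1))^2) \<le> 0"
    using F_id[OF assms(1), of c] assms(2) by simp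
  have s0: "(\<Sum>k=4..n. (c k - c (k+1))^2) \<ge> 0" by (intro sum_nonneg) auto
  have "(c 1)^2 = 0" "(c 2)^2 = 0" "(c 1 + c 2 + c 3)^2 = 0" "(c 3 + c 4)^2 = 0"
     "(\<Sum>k=4..n. (c k - c (k+1))^2) = 0"
    using le s0 by (smt (verit) zero_le_power2)+
  hence c123: "c 1 = 0" "c 2 = 0" "c 3 = 0" "c 4 = 0" and sz: "(\<Sum>k=4..n. (c k - c (k+1))^2) = 0" by auto
  have "\<forall>j\<in>{4..n}. (c j - c (j+1))^2 = 0"
    using sz by (subst (asm) sum_nonneg_eq_0_iff) auto
  hence ch: "\<forall>j\<in>{4..n}. c j = c (Suc j)" by auto
  have cn: "c (Suc n) = 0" using assms(2) by auto
  have "c k0 = 0"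
  proof (cases "k0 \<ge> 4")
    case True thus ?thesis using chain_zero[OF ch cn True] assms(3) by auto
  next
    case False
    hence "k0 = 1 \<or> k0 = 2 \<or> k0 = 3" using assms(3) by auto
    thus ?thesis using c123 by auto
  qed
  thus False using assms(4) by simp
qed

lemma even_sq_minus: "even ((z::int)^2 - z)"
proof -
  have "(z::int)^2 - z = z * (z - 1)" by (simp add: power2_eq_square algebra_simps)
  thus ?thesis by (cases "even z") auto
qed

lemma Z_bound: assumes "n \<ge> 3" "\<forall>k. k < 1 \<or> k > n \<longrightarrow> c k = 0" "k0 \<in> {1..n}" "c k0 \<noteq> 0"
  shows "(\<Sum>i=1..n. (xv c i + yv c i)^2) \<ge> 2"
proof -
  let ?Z = "\<lambda>i. xv c i + yv c i"
  have "\<exists>i\<in>{1..n}. ?Z i \<noteq> 0"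
  proof (rule ccontr)
    assume "\<not> ?thesis"
    hence "(\<Sum>i=1..n. xv c i * (xv c i + yv c i)) = 0" by simp
    thus False using F_pos[OF assms] by simp
  qed
  then obtain i where i: "i \<in> {1..n}" "?Z i \<noteq> 0" by blast
  have "?Z i ^2 \<le> (\<Sum>i=1..n. ?Z i ^2)" by (rule member_le_sum[OF i(1)]) auto
  moreover have "?Z i ^2 \<ge> 1" using i(2) by (smt (verit) int_one_le_iff_zero_less zero_less_power2)
  ultimately have ge1: "(\<Sum>i=1..n. ?Z i ^2) \<ge> 1" by simp
  have "even (\<Sum>i=1..n. ?Z i ^2 - ?Z i)" by (intro dvd_sum even_sq_minus)
  moreover have "even (\<Sum>i=1..n. ?Z i)" using G_id[OF assms(1), of c] assms(2) by simp
  ultimately have "even (\<Sum>i=1..n. ?Z i ^2)" by (simp add: sum_subtractf)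
  with ge1 show ?thesis by presburger
qed

lemma X_bound: assumes "k0 \<in> {1..n}" "c k0 \<noteq> 0"
  shows "(\<Sum>i=1..n. (xv c i)^2) \<ge> 1"
proof -
  have "(xv c k0)^2 \<le> (\<Sum>i=1..n. (xv c i)^2)" by (rule member_le_sum[OF assms(1)]) auto
  moreover have "(xv c k0)^2 \<ge> 1" using assms(2) unfolding xv_def
    by (smt (verit) int_one_le_iff_zero_less zero_less_power2 power2_minus)
  ultimately show ?thesis by simp
qed



lemma ab_facts: assumes "1 < a" "a \<le> sqrt 2"
  shows "alpha_bar a \<ge> 0" "(alpha_bar a)^2 = 2 - a^2" "alpha_bar a \<le> a"
proof -
  have "a^2 \<le> (sqrt 2)^2" using assms by (intro power_mono) auto
  also have "(sqrt 2)^2 = (2::real)" by (rule real_sqrt_pow2) simp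
  finally have a2: "a^2 \<le> 2" .
  show "alpha_bar a \<ge> 0" using a2 by (simp add: alpha_bar_def)
  show sq: "(alpha_bar a)^2 = 2 - a^2" using a2 by (simp add: alpha_bar_def)
  have "1 \<le> a^2" using assms by (simp add: one_le_power)
  hence "sqrt (2 - a^2) \<le> sqrt (a^2)" by (intro real_sqrt_le_mono) simp
  thus "alpha_bar a \<le> a" using assms by (simp add: alpha_bar_def)
qed

lemma norm_bound: assumes "n \<ge> 3" "1 < a" "a \<le> sqrt 2" "v \<in> Dlattice a n" "v \<noteq> (\<lambda>i. 0)"
  shows "vnorm n v \<ge> sqrt 2"
proof -
  from assms(4) have "\<exists>c. v = (\<lambda>i. \<Sum>k = 1..n. of_int (c k) * Dbasis a k i)"
    by (simp add: Dlattice_def)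
  then obtain c where vc: "v = (\<lambda>i. \<Sum>k = 1..n. of_int (c k) * Dbasis a k i)"
    by (rule exE)
  define c' where "c' = (\<lambda>k. if 1 \<le> k \<and> k \<le> n then c k else 0)"
  have cz: "\<forall>k. k < 1 \<or> k > n \<longrightarrow> c' k = 0" by (auto simp: c'_def)
  have vc': "v = (\<lambda>i. \<Sum>k = 1..n. of_int (c' k) * Dbasis a k i)"
    unfolding vc by (intro ext sum.cong refl) (simp add: c'_def)
  obtain k0 where k0: "k0 \<in> {1..n}" "c' k0 \<noteq> 0"
  proof -
    have "\<exists>k0\<in>{1..n}. c' k0 \<noteq> 0"
    proof (rule ccontr)
      assume H: "\<not> ?thesis"
      have "v i = 0" for i unfolding vc' using H by (intro sum.neutral) auto
      hence "v = (\<lambda>i. 0)" by (intro ext)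
      thus False using assms(5) by simp
    qed
    thus ?thesis using that by blast
  qed
  define b where "b = alpha_bar a"
  have b: "b \<ge> 0" "b^2 = 2 - a^2" "b \<le> a" using ab_facts[OF assms(2,3)] by (auto simp: b_def)
  define X where "X = (\<lambda>i. real_of_int (xv c' i))"
  define Z where "Z = (\<lambda>i. real_of_int (xv c' i + yv c' i))"
  have vi: "v i = (a - b) * X i + b * Z i" if "i \<in> {1..n}" for i
    using coord[OF assms(1) cz, of i a] that unfolding vc' X_def Z_def b_def
    by (simp add: algebra_simps)
  have "(\<Sum>i=1..n. (v i)^2) = (\<Sum>i=1..n. ((a - b) * X i + b * Z i)^2)"
    by (intro sum.cong) (auto simp: vi)
  also have "\<dots> = (\<Sum>i=1..n. (a-b)^2 * (X i)^2 + 2*(a-b)*b * (X i * Z i) + b^2 * (Z i)^2)"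
    by (intro sum.cong) (simp_all add: power2_eq_square algebra_simps)
  also have "\<dots> = (a-b)^2 * (\<Sum>i=1..n. (X i)^2) + 2*(a-b)*b * (\<Sum>i=1..n. X i * Z i)
     + b^2 * (\<Sum>i=1..n. (Z i)^2)"
    by (simp add: sum.distrib sum_distrib_left)
  finally have eq: "(\<Sum>i=1..n. (v i)^2) = \<dots>" .
  have X1: "(\<Sum>i=1..n. (X i)^2) \<ge> 1"
  proof -
    have "(\<Sum>i=1..n. (X i)^2) = of_int (\<Sum>i=1..n. (xv c' i)^2)" by (simp add: X_def)
    moreover have "(1::real) \<le> of_int (\<Sum>i=1..n. (xv c' i)^2)"
      using X_bound[of k0 n c'] k0 by (metis of_int_1 of_int_le_iff)
    ultimately show ?thesis by simp
  qed
  have XZ1: "(\<Sum>i=1..n. X i * Z i) \<ge> 1"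
  proof -
    have "(\<Sum>i=1..n. X i * Z i) = of_int (\<Sum>i=1..n. xv c' i * (xv c' i + yv c' i))" by (simp add: X_def Z_def)
    moreover have "(1::real) \<le> of_int (\<Sum>i=1..n. xv c' i * (xv c' i + yv c' i))"
      using F_pos[OF assms(1) cz k0] by (metis of_int_1 of_int_le_iff)
    ultimately show ?thesis by simp
  qed
  have Z2: "(\<Sum>i=1..n. (Z i)^2) \<ge> 2"
  proof -
    have "(\<Sum>i=1..n. (Z i)^2) = of_int (\<Sum>i=1..n. (xv c' i + yv c' i)^2)" by (simp add: Z_def)
    moreover have "(2::real) \<le> of_int (\<Sum>i=1..n. (xv c' i + yv c' i)^2)"
      using Z_bound[OF assms(1) cz k0] by (metis of_int_numeral of_int_le_iff)
    ultimately show ?thesis by simp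
  qed
  have "(a-b)^2 * (\<Sum>i=1..n. (X i)^2) \<ge> (a-b)^2 * 1" using X1 by (intro mult_left_mono) auto
  moreover have "2*(a-b)*b * (\<Sum>i=1..n. X i * Z i) \<ge> 2*(a-b)*b * 1" using XZ1 b by (intro mult_left_mono) auto
  moreover have "b^2 * (\<Sum>i=1..n. (Z i)^2) \<ge> b^2 * 2" using Z2 by (intro mult_left_mono) auto
  ultimately have "(\<Sum>i=1..n. (v i)^2) \<ge> (a-b)^2 + 2*(a-b)*b + 2*b^2" unfolding eq by linarith
  also have "(a-b)^2 + 2*(a-b)*b + 2*b^2 = 2" using b(2) by (simp add: power2_eq_square algebra_simps)
  finally show ?thesis unfolding vnorm_def by simp
qed

lemma b1_in: assumes "n \<ge> 3" "1 < a" "a \<le> sqrt 2"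
  shows "sqrt 2 \<in> {vnorm n v | v. v \<in> Dlattice a n \<and> v \<noteq> (\<lambda>i. 0)}"
proof -
  define c :: "nat \<Rightarrow> int" where "c = (\<lambda>k. if k = 1 then 1 else 0)"
  define v where "v = (\<lambda>i. \<Sum>k = 1..n. of_int (c k) * Dbasis a k i)"
  have vD: "v = Dbasis a 1"
  proof
    fix i
    have "v i = (\<Sum>k = 1..n. if k = 1 then Dbasis a 1 i else 0)"
      unfolding v_def by (intro sum.cong) (auto simp: c_def)
    also have "\<dots> = Dbasis a 1 i" using assms(1) by simp
    finally show "v i = Dbasis a 1 i" .
  qed
  have "v \<in> Dlattice a n" unfolding Dlattice_def v_def by blast
  moreover have "v \<noteq> (\<lambda>i. 0)"
  proof
    assume "v = (\<lambda>i. 0)"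
    hence "v 1 = 0" by simp
    thus False using assms(2) by (simp add: vD Dbasis_def std_e_def)
  qed
  moreover have "vnorm n v = sqrt 2"
  proof -
    have "(\<Sum>i=1..n. (v i)^2) = (\<Sum>i=1..n. (if i = 1 then a^2 else 0) + (if i = 2 then (alpha_bar a)^2 else 0))"
      by (intro sum.cong) (auto simp: vD Dbasis_def std_e_def)
    also have "\<dots> = a^2 + (alpha_bar a)^2" using assms(1) by (simp add: sum.distrib)
    also have "\<dots> = 2" using ab_facts[OF assms(2,3)] by simp
    finally show ?thesis by (simp add: vnorm_def)
  qed
  ultimately have "\<exists>w. sqrt 2 = vnorm n w \<and> w \<in> Dlattice a n \<and> w \<noteq> (\<lambda>i. 0)" by metis
  thus ?thesis by simp
qed

lemma lambda1_eq: assumes "n \<ge> 3" "1 < a" "a \<le> sqrt 2"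
  shows "lambda1 n (Dlattice a n) = sqrt 2"
  unfolding lambda1_def
  by (rule cInf_eq_minimum[OF b1_in[OF assms]]) (use norm_bound[OF assms] in blast)


theorem mainTheorem16:
  fixes n :: nat and a :: real
  assumes "n \<ge> 3" and "1 < a" and "a \<le> sqrt 2"
  shows "Dcenter_density a n =
    1 / (2 powr (real n / 2) * a ^ (n - 3) * (a ^ 3 + alpha_bar a ^ 3))"
proof -
  have l: "lambda1 n (Dlattice a n) = sqrt 2" by (rule lambda1_eq[OF assms])
  have ab0: "alpha_bar a \<ge> 0" using ab_facts[OF assms(2,3)] by simp
  have pos: "a ^ 3 + alpha_bar a ^ 3 > 0" using assms(2) ab0 by (simp add: add_pos_nonneg)
  have "Dvol a n = \<bar>(-a)^(n-3) * (a^3 + alpha_bar a ^ 3)\<bar>"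
    unfolding Dvol_def using det_MM[OF assms(1), of a] by (simp add: MM_def)
  also have "\<dots> = a^(n-3) * (a^3 + alpha_bar a ^ 3)"
    using assms(2) pos by (simp add: abs_mult power_abs)
  finally have V: "Dvol a n = a^(n-3) * (a^3 + alpha_bar a ^ 3)" .
  define p where "p = (2::real) powr (real n / 2)"
  have p0: "p > 0" by (simp add: p_def)
  have sp: "sqrt 2 ^ n = p"
  proof -
    have "sqrt 2 = (2::real) powr (1/2)" by (simp add: powr_half_sqrt)
    hence "sqrt 2 ^ n = (2::real) powr (real n * (1/2))" by (simp add: powr_power)
    thus ?thesis by (simp add: p_def)
  qed
  have tp: "(2::real) ^ n = p * p"
  proof -
    have "(2::real) ^ n = 2 powr (real n)" by (simp add: powr_realpow)
    also have "\<dots> = 2 powr (real n / 2 + real n / 2)" by simp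
    also have "\<dots> = p * p" unfolding p_def by (rule powr_add)
    finally show ?thesis .
  qed
  have Vp: "a^(n-3) * (a^3 + alpha_bar a ^ 3) > 0" using assms(2) pos by simp
  have "Dcenter_density a n = p / (p * p * (a^(n-3) * (a^3 + alpha_bar a ^ 3)))"
    unfolding Dcenter_density_def l V sp tp ..
  also have "\<dots> = 1 / (p * a ^ (n - 3) * (a ^ 3 + alpha_bar a ^ 3))"
  proof -
    have g: "p / (p * p * V) = 1 / (p * V)" if "V > 0" for V :: real
      using p0 that by (simp add: field_simps power2_eq_square)
    show ?thesis using g[OF Vp] by (simp add: mult.assoc)
  qed
  finally show ?thesis by (simp add: p_def)
qed

end
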